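(* Let $S(\mathbf{G},\mathbf{\Sigma})$ be a constrained switching system and $T\ge1$ an integer. Let $S^T$ be its $T$-product lift and $S_{T-1}$ its $(T-1)$-path-dependent lift. Then $$\gamma_*(S_{T-1})\le\gamma_*(S^T)^{1/T}.$$
   Context: An automaton $\mathbf{G}(V,E)$ is a strongly connected directed graph with finite node set $V$ and finite edge set $E$ of labelled edges $(v,w,\sigma)$, $\sigma$ indexing a matrix $A_\sigma$ of a finite set $\mathbf{\Sigma}\subset\mathbb{R}^{n\times n}$. A path of length $T$ is a sequence of $T$ consecutive edges. The constrained switching system $S(\mathbf{G},\mathbf{\Sigma})$ is $x_{t+1}=A_{\sigma(t)}x_t$ with switching sequences equal to label sequences of paths in $\mathbf{G}$. $T$-product lift $S^T$: automaton with the same nodes $V$ and one edge $(v,w,\{\sigma(1)\dots\sigma(T)\})$ per path of length $T$ in $\mathbf{G}$ from $v$ to $w$ with labels $\sigma(1),\dots,\sigma(T)$, whose associated matrix is $A_{\sigma(T)}\cdots A_{\sigma(1)}$. $M$-path-dependent lift $S_M$ ($M\ge0$): same matrix set $\mathbf{\Sigma}$; for $M=0$ the automaton is $\mathbf{G}$; for $M\ge1$ the automaton has one node $v_p$ per path $p$ of length $M$ in $\mathbf{G}$, and for each path $p=(e_1,\dots,e_{M+1})$ of length $M+1$ in $\mathbf{G}$ an edge $(v_{p^-},v_{p^+},\sigma_p)$ where $p^-=(e_1,\dots,e_M)$, $p^+=(e_2,\dots,e_{M+1})$ and $\sigma_p$ is the label of $e_{M+1}$. For a constrained switching system $S'$ on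 automaton $(V',E')$, $\gamma_*(S')$ is the infimum of $\gamma$ such that there exist symmetric $Q_v\succ0$ ($v\in V'$) with $\gamma^2Q_v-A_\sigma^\top Q_wA_\sigma\succeq0$ for all $(v,w,\sigma)\in E'$. *)

theory Defs
  imports "HOL-Analysis.Analysis"
begin

type_synonym ('v,'l) edge = "'v \<times> 'v \<times> 'l"

definition src :: "('v,'l) edge \<Rightarrow> 'v" where "src e = fst e"
definition tgt :: "('v,'l) edge \<Rightarrow> 'v" where "tgt e = fst (snd e)"
definition lbl :: "('v,'l) edge \<Rightarrow> 'l" where "lbl e = snd (snd e)"

definition is_path :: "('v,'l) edge set \<Rightarrow> ('v,'l) edge list \<Rightarrow> bool" where
  "is_path E p \<longleftrightarrow> set p \<subseteq> E \<and>
     (\<forall>i. Suc i < length p \<longrightarrow> tgt (p ! i) = src (p ! Suc i))"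

definition paths :: "('v,'l) edge set \<Rightarrow> nat \<Rightarrow> ('v,'l) edge list set" where
  "paths E T = {p. is_path E p \<and> length p = T}"

definition strongly_connected :: "'v set \<Rightarrow> ('v,'l) edge set \<Rightarrow> bool" where
  "strongly_connected V E \<longleftrightarrow> (\<forall>v\<in>V. \<forall>w\<in>V. v = w \<or>
     (\<exists>p. is_path E p \<and> p \<noteq> [] \<and> src (hd p) = v \<and> tgt (last p) = w))"

definition automaton :: "'v set \<Rightarrow> ('v,'l) edge set \<Rightarrow> bool" where
  "automaton V E \<longleftrightarrow> finite V \<and> finite E \<and> (\<forall>e\<in>E. src e \<in> V \<and> tgt e \<in> V)
     \<and> strongly_connected V E"

definition sym_mat :: "real^'n^'n \<Rightarrow> bool" where
  "sym_mat Q \<longleftrightarrow> transpose Q = Q"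

definition pos_def :: "real^'n^'n \<Rightarrow> bool" where
  "pos_def Q \<longleftrightarrow> sym_mat Q \<and> (\<forall>x. x \<noteq> 0 \<longrightarrow> x \<bullet> (Q *v x) > 0)"

definition psd :: "real^'n^'n \<Rightarrow> bool" where
  "psd M \<longleftrightarrow> (\<forall>x. x \<bullet> (M *v x) \<ge> 0)"

definition gamma_star :: "'v set \<Rightarrow> ('v,'l) edge set \<Rightarrow> ('l \<Rightarrow> real^'n^'n) \<Rightarrow> real" where
  "gamma_star V E A = Inf {\<gamma>. \<gamma> \<ge> 0 \<and> (\<exists>Q :: 'v \<Rightarrow> real^'n^'n.
      (\<forall>v\<in>V. pos_def (Q v)) \<and>
      (\<forall>(v,w,s)\<in>E. psd ((\<gamma>^2) *\<^sub>R Q v - transpose (A s) ** Q w ** A s)))}"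

fun prod_mat :: "('l \<Rightarrow> real^'n^'n) \<Rightarrow> 'l list \<Rightarrow> real^'n^'n" where
  "prod_mat A [] = mat 1"
| "prod_mat A (s # ss) = prod_mat A ss ** A s"

definition product_lift_edges :: "('v,'l) edge set \<Rightarrow> nat \<Rightarrow> ('v, 'l list) edge set" where
  "product_lift_edges E T = {(src (hd p), tgt (last p), map lbl p) | p. p \<in> paths E T}"

definition gamma_product_lift :: "'v set \<Rightarrow> ('v,'l) edge set \<Rightarrow> ('l \<Rightarrow> real^'n^'n) \<Rightarrow> nat \<Rightarrow> real" where
  "gamma_product_lift V E A T = gamma_star V (product_lift_edges E T) (prod_mat A)"

definition path_lift_edges :: "('v,'l) edge set \<Rightarrow> nat \<Rightarrow> (('v,'l) edge list, 'l) edge set" where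
  "path_lift_edges E M = {(take M p, drop 1 p, lbl (last p)) | p. p \<in> paths E (Suc M)}"

definition gamma_path_lift :: "'v set \<Rightarrow> ('v,'l) edge set \<Rightarrow> ('l \<Rightarrow> real^'n^'n) \<Rightarrow> nat \<Rightarrow> real" where
  "gamma_path_lift V E A M =
     (if M = 0 then gamma_star V E A else gamma_star (paths E M) (path_lift_edges E M) A)"

end

theory Submission
  imports Defs
begin

lemma dot_transp: "x \<bullet> (A *v y) = (transpose A *v x) \<bullet> (y::real^'n)"
  by (simp add: dot_lmul_matrix[symmetric] transpose_matrix_vector)

lemma sym_form: "sym_mat R \<Longrightarrow> x \<bullet> (R *v y) = y \<bullet> (R *v (x::real^'n))"
  unfolding sym_mat_def by (metis dot_transp inner_commute)

lemma pd_inv: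
  fixes R :: "real^'n^'n"
  assumes "pos_def R"
  shows "R ** matrix_inv R = mat 1 \<and> matrix_inv R ** R = mat 1"
proof -
  have "\<forall>x. R *v x = 0 \<longrightarrow> x = 0"
    using assms unfolding pos_def_def by (metis inner_zero_right less_irrefl)
  then obtain B where "B ** R = mat 1" using matrix_left_invertible_ker by blast
  then have "invertible R" using invertible_left_inverse by blast
  then obtain B' where "R ** B' = mat 1 \<and> B' ** R = mat 1" unfolding invertible_def by blast
  then show ?thesis unfolding matrix_inv_def by (rule someI)
qed

lemma pd_inv_pd:
  fixes R :: "real^'n^'n"
  assumes "pos_def R"
  shows "pos_def (matrix_inv R)"
proof -
  let ?Ri = "matrix_inv R"
  have i: "R ** ?Ri = mat 1" "?Ri ** R = mat 1" using pd_inv[OF assms] by auto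
  have sR: "transpose R = R" using assms unfolding pos_def_def sym_mat_def by auto
  have "transpose ?Ri ** R = mat 1"
    by (metis i(1) matrix_transpose_mul sR transpose_mat)
  then have "transpose ?Ri = ?Ri"
    by (metis i(1) matrix_mul_assoc matrix_mul_lid matrix_mul_rid)
  moreover have "y \<bullet> (?Ri *v y) > 0" if "y \<noteq> 0" for y
  proof -
    let ?z = "?Ri *v y"
    have "R *v ?z = y" by (simp add: matrix_vector_mul_assoc i)
    then have "?z \<noteq> 0" using that by auto
    then have "?z \<bullet> (R *v ?z) > 0" using assms unfolding pos_def_def by auto
    then show ?thesis using \<open>R *v ?z = y\<close> by (simp add: inner_commute)
  qed
  ultimately show ?thesis unfolding pos_def_def sym_mat_def by auto
qed

lemma cs_form:
  fixes R :: "real^'n^'n"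
  assumes s: "sym_mat R" and p: "\<And>x. 0 \<le> x \<bullet> (R *v x)"
  shows "(a \<bullet> (R *v b))^2 \<le> (a \<bullet> (R *v a)) * (b \<bullet> (R *v b))"
proof -
  let ?p = "a \<bullet> (R *v a)" and ?q = "a \<bullet> (R *v b)" and ?r = "b \<bullet> (R *v b)"
  have quad: "0 \<le> ?p + 2*t*?q + t^2 * ?r" for t
  proof -
    have "0 \<le> (a + t *\<^sub>R b) \<bullet> (R *v (a + t *\<^sub>R b))" by (rule p)
    also have "\<dots> = ?p + t * (b \<bullet> (R *v a)) + t * ?q + t^2 * ?r"
      by (simp add: matrix_vector_right_distrib matrix_scaleR_vector_ac[symmetric]
           scaleR_matrix_vector_assoc[symmetric] inner_add_left inner_add_right power2_eq_square algebra_simps)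
    also have "b \<bullet> (R *v a) = ?q" using sym_form[OF s] by metis
    finally show ?thesis by simp
  qed
  show ?thesis
  proof (cases "?r = 0")
    case True
    have "?q = 0"
    proof (rule ccontr)
      assume "?q \<noteq> 0"
      have "0 \<le> ?p + 2*(-(?p+1)/(2*?q))*?q + (-(?p+1)/(2*?q))^2 * ?r" by (rule quad)
      then show False using True \<open>?q \<noteq> 0\<close> by (simp add: field_simps)
    qed
    then show ?thesis using True by simp
  next
    case False
    have r0: "?r > 0" using p[of b] False by linarith
    have "0 \<le> ?p + 2*(-?q/?r)*?q + (-?q/?r)^2 * ?r" by (rule quad)
    then have "0 \<le> ?p*?r - ?q^2" using r0 by (simp add: field_simps power2_eq_square)
    then show ?thesis by (simp add: algebra_simps)
  qed
qed


lemma dual: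
  fixes Q R B :: "real^'n^'n"
  assumes pQ: "pos_def Q" and pR: "pos_def R" and c: "c \<ge> 0"
    and H: "\<And>z. (B *v z) \<bullet> (R *v (B *v z)) \<le> c * (z \<bullet> (Q *v z))"
  shows "y \<bullet> ((B ** matrix_inv Q ** transpose B) *v y) \<le> c * (y \<bullet> (matrix_inv R *v y))"
proof -
  let ?Qi = "matrix_inv Q" and ?Ri = "matrix_inv R"
  define w where "w = transpose B *v y"
  define z where "z = ?Qi *v w"
  define s where "s = y \<bullet> ((B ** ?Qi ** transpose B) *v y)"
  have s1: "s = y \<bullet> (B *v z)" unfolding s_def z_def w_def by (metis matrix_vector_mul_assoc)
  have Qz: "Q *v z = w" unfolding z_def by (simp add: matrix_vector_mul_assoc pd_inv[OF pQ])
  have "z \<bullet> (Q *v z) = w \<bullet> z" by (simp add: Qz inner_commute)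
  also have "\<dots> = y \<bullet> (B *v z)" unfolding w_def by (simp add: dot_transp)
  finally have s2: "s = z \<bullet> (Q *v z)" using s1 by simp
  have s0: "s \<ge> 0" using s2 pQ unfolding pos_def_def by (cases "z = 0") (auto intro: less_imp_le)
  have sR: "sym_mat R" using pR unfolding pos_def_def by auto
  have pR': "\<And>x. 0 \<le> x \<bullet> (R *v x)" using pR unfolding pos_def_def
    by (metis inner_zero_left less_eq_real_def)
  define a where "a = ?Ri *v y"
  have Ra: "R *v a = y" unfolding a_def by (simp add: matrix_vector_mul_assoc pd_inv[OF pR])
  have "(a \<bullet> (R *v (B *v z)))^2 \<le> (a \<bullet> (R *v a)) * ((B *v z) \<bullet> (R *v (B *v z)))"
    by (rule cs_form[OF sR pR'])
  moreover have "a \<bullet> (R *v (B *v z)) = s"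
    using sym_form[OF sR, of a "B *v z"] Ra s1 by (simp add: inner_commute)
  moreover have "a \<bullet> (R *v a) = y \<bullet> (?Ri *v y)" using Ra a_def by (simp add: inner_commute)
  moreover have "(B *v z) \<bullet> (R *v (B *v z)) \<le> c * s" using H[of z] s2 by simp
  moreover have "y \<bullet> (?Ri *v y) \<ge> 0" using pd_inv_pd[OF pR] unfolding pos_def_def
    by (metis inner_zero_left less_eq_real_def)
  ultimately have "s^2 \<le> (y \<bullet> (?Ri *v y)) * (c * s)"
    by (metis (no_types, lifting) mult_left_mono order_trans)
  then have "s * s \<le> (c * (y \<bullet> (?Ri *v y))) * s" by (simp add: power2_eq_square algebra_simps)
  then have "s \<le> c * (y \<bullet> (?Ri *v y))"
    using s0 \<open>y \<bullet> (?Ri *v y) \<ge> 0\<close> c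
    by (metis mult_right_le_imp_le mult_nonneg_nonneg order_le_less)
  then show ?thesis unfolding s_def .
qed


lemma transpose_add: "transpose (X + Y) = transpose X + transpose (Y::real^'n^'n)"
  by (simp add: transpose_def vec_eq_iff)
lemma transpose_zero: "transpose (0::real^'n^'n) = 0"
  by (simp add: transpose_def vec_eq_iff)

lemma transpose_sum: "transpose (sum M K) = sum (\<lambda>k. transpose (M k)) (K::'a set)"
  for M :: "'a \<Rightarrow> real^'n^'n"
  by (induct K rule: infinite_finite_induct) (auto simp: transpose_add transpose_zero)

lemma sum_mvec: "(sum M K) *v y = sum (\<lambda>k. M k *v y) (K::'a set)"
  for M :: "'a \<Rightarrow> real^'n^'n"
  by (induct K rule: infinite_finite_induct) (auto simp: matrix_vector_mult_add_rdistrib)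

lemma form_sandwich:
  fixes S P :: "real^'n^'n"
  shows "y \<bullet> ((S ** P ** transpose S) *v y) = (transpose S *v y) \<bullet> (P *v (transpose S *v y))"
  by (metis dot_transp matrix_vector_mul_assoc transpose_transpose)

lemma psd_iff: "psd (k *\<^sub>R X - Y) \<longleftrightarrow> (\<forall>y. y \<bullet> (Y *v y) \<le> k * (y \<bullet> (X *v y)))"
  for X Y :: "real^'n^'n"
  unfolding psd_def
  by (simp add: matrix_vector_mult_diff_rdistrib scaleR_matrix_vector_assoc[symmetric] inner_diff_right)

lemma prod_mat_append: "prod_mat A (xs @ ys) = prod_mat A ys ** prod_mat A xs"
  by (induct xs) (auto simp: matrix_mul_assoc)

definition node_at :: "('v,'l) edge list \<Rightarrow> nat \<Rightarrow> 'v" where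
  "node_at p k = (if k < length p then src (p!k) else tgt (last p))"

definition Smat :: "('l \<Rightarrow> real^'n^'n) \<Rightarrow> ('v,'l) edge list \<Rightarrow> nat \<Rightarrow> real^'n^'n" where
  "Smat A p k = prod_mat A (map lbl (drop k p))"

definition gterm :: "('l \<Rightarrow> real^'n^'n) \<Rightarrow> ('v \<Rightarrow> real^'n^'n) \<Rightarrow> ('v,'l) edge list \<Rightarrow> nat \<Rightarrow> real^'n \<Rightarrow> real" where
  "gterm A P p k y = (transpose (Smat A p k) *v y) \<bullet> (P (node_at p k) *v (transpose (Smat A p k) *v y))"

definition Pmat :: "('l \<Rightarrow> real^'n^'n) \<Rightarrow> ('v \<Rightarrow> real^'n^'n) \<Rightarrow> real \<Rightarrow> ('v,'l) edge list \<Rightarrow> real^'n^'n" where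
  "Pmat A P c p = (\<Sum>k\<le>length p. c^(length p - k) *\<^sub>R (Smat A p k ** P (node_at p k) ** transpose (Smat A p k)))"

lemma Pmat_form: "y \<bullet> (Pmat A P c p *v y) = (\<Sum>k\<le>length p. c^(length p - k) * gterm A P p k y)"
  unfolding Pmat_def gterm_def
  by (simp add: sum_mvec inner_sum_right scaleR_matrix_vector_assoc[symmetric] form_sandwich)

lemma Pmat_sym:
  assumes "\<And>k. k \<le> length p \<Longrightarrow> sym_mat (P (node_at p k))"
  shows "sym_mat (Pmat A P c p)"
  unfolding sym_mat_def Pmat_def transpose_sum transpose_scalar
  apply (rule sum.cong[OF refl])
  using assms unfolding sym_mat_def
  by (simp add: matrix_transpose_mul matrix_mul_assoc)

lemma Pmat_pd:
  assumes "\<And>k. k \<le> length p \<Longrightarrow> pos_def (P (node_at p k))" and "c > 0"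
  shows "pos_def (Pmat A P c p)"
proof -
  have s: "sym_mat (Pmat A P c p)" using assms(1) Pmat_sym unfolding pos_def_def by blast
  have g0: "0 \<le> gterm A P p k y" if "k \<le> length p" for k y
    using assms(1)[OF that] unfolding gterm_def pos_def_def
    by (metis inner_zero_left order_le_less)
  have "y \<bullet> (Pmat A P c p *v y) > 0" if "y \<noteq> 0" for y
  proof -
    have "gterm A P p (length p) y > 0"
      using assms(1)[of "length p"] that unfolding gterm_def Smat_def pos_def_def by simp
    then show ?thesis unfolding Pmat_form
      by (intro sum_pos2[of _ "length p"]) (auto intro!: mult_nonneg_nonneg g0 simp: \<open>c>0\<close> less_imp_le)
  qed
  then show ?thesis using s unfolding pos_def_def by auto
qed


lemma sum_ineq:
  fixes g :: "nat \<Rightarrow> real"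
  assumes gp: "g' > 0" and c: "c = inverse (g'^2)"
    and nn: "\<And>k. k \<le> Suc M \<Longrightarrow> 0 \<le> g k"
    and key: "g 0 \<le> g'^(2*Suc M) * g (Suc M)"
  shows "(\<Sum>k\<le>M. c^(M-k) * g k) \<le> g'^2 * (\<Sum>k\<le>M. c^(M-k) * g (Suc k))"
proof -
  have cg: "g'^2 * c = 1" using gp c by simp
  have cpos: "c > 0" using gp c by simp
  have "c^M * g'^(2*M) = (c * g'^2)^M" by (simp add: power_mult_distrib power_mult)
  then have cM: "c^M * g'^(2*M) = 1" using cg by (simp add: mult.commute)
  have first: "c^M * g 0 \<le> g'^2 * g (Suc M)"
  proof -
    have "c^M * g 0 \<le> c^M * (g'^(2*Suc M) * g (Suc M))"
      using key cpos by (simp add: mult_left_mono)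
    also have "\<dots> = (c^M * g'^(2*M)) * g'^2 * g (Suc M)"
    proof -
      have e: "g'^(2*Suc M) = g'^(2*M) * g'^2"
        by (metis mult_Suc_right power_add add.commute)
      show ?thesis unfolding e by (simp only: mult.assoc)
    qed
    finally show ?thesis using cM by simp
  qed
  show ?thesis
  proof (cases M)
    case 0
    then show ?thesis using first by simp
  next
    case (Suc M')
    have L: "(\<Sum>k\<le>M. c^(M-k) * g k) = c^M * g 0 + (\<Sum>i\<le>M'. c^(M'-i) * g (Suc i))"
      unfolding Suc sum.atMost_Suc_shift by simp
    have R: "g'^2 * (\<Sum>k\<le>M. c^(M-k) * g (Suc k))
       = (\<Sum>k\<le>M'. g'^2 * c^(M-k) * g (Suc k)) + g'^2 * g (Suc M)"
      unfolding Suc sum.atMost_Suc by (simp add: sum_distrib_left algebra_simps)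
    have "(\<Sum>k\<le>M'. g'^2 * c^(M-k) * g (Suc k)) = (\<Sum>i\<le>M'. c^(M'-i) * g (Suc i))"
    proof (rule sum.cong[OF refl])
      fix k assume "k \<in> {..M'}"
      then have "M - k = Suc (M' - k)" using Suc by auto
      then show "g'^2 * c^(M-k) * g (Suc k) = c^(M'-k) * g (Suc k)"
        using cg by (simp add: mult.assoc[symmetric])
    qed
    then show ?thesis using L R first by simp
  qed
qed

lemma paths_len: "q \<in> paths E n \<Longrightarrow> length q = n"
  unfolding paths_def by auto

lemma take_drop_last:
  assumes "length q = Suc M" "k \<le> M"
  shows "drop k q = drop k (take M q) @ [last q]"
proof -
  have ne: "q \<noteq> []" using assms(1) by auto
  have "butlast q = take M q" by (simp add: butlast_conv_take assms(1))
  then have "q = take M q @ [last q]" using ne append_butlast_last_id[OF ne] by simp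
  then have "drop k q = drop k (take M q @ [last q])" by simp
  also have "\<dots> = drop k (take M q) @ [last q]" using assms by simp
  finally show ?thesis .
qed

lemma Smat_take:
  assumes "length q = Suc M" "k \<le> M"
  shows "Smat A q k = A (lbl (last q)) ** Smat A (take M q) k"
  unfolding Smat_def take_drop_last[OF assms] by (simp add: prod_mat_append)

lemma Smat_drop: "Smat A (drop 1 q) k = Smat A q (Suc k)"
  unfolding Smat_def by (simp add: drop_drop)

lemma node_take:
  assumes "q \<in> paths E (Suc M)" "M \<ge> 1" "k \<le> M"
  shows "node_at (take M q) k = node_at q k"
proof -
  have l: "length q = Suc M" using assms paths_len by blast
  have ip: "is_path E q" using assms(1) unfolding paths_def by auto
  show ?thesis
  proof (cases "k < M")
    case True then show ?thesis using l unfolding node_at_def by simp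
  next
    case False
    then have k: "k = M" using assms by simp
    have "last (take M q) = q ! (M - 1)"
      using l assms(2) by (subst last_conv_nth) auto
    moreover have "tgt (q ! (M - 1)) = src (q ! Suc (M - 1))"
      using ip l assms(2) unfolding is_path_def by simp
    moreover have "Suc (M - 1) = M" using assms(2) by simp
    ultimately show ?thesis using l k unfolding node_at_def by simp
  qed
qed

lemma node_drop:
  assumes "length q = Suc M" "k \<le> M" "M \<ge> 1"
  shows "node_at (drop 1 q) k = node_at q (Suc k)"
proof (cases "k < M")
  case True then show ?thesis using assms unfolding node_at_def by simp
next
  case False
  then have "k = M" using assms by simp
  moreover have "last (drop 1 q) = last q" using assms by (intro last_drop) simp
  ultimately show ?thesis using assms unfolding node_at_def by simp
qed

lemma gterm_take:
  assumes "q \<in> paths E (Suc M)" "M \<ge> 1" "k \<le> M"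
  shows "gterm A P (take M q) k (transpose (A (lbl (last q))) *v y) = gterm A P q k y"
proof -
  have l: "length q = Suc M" using assms paths_len by blast
  have "transpose (Smat A (take M q) k) *v (transpose (A (lbl (last q))) *v y)
      = transpose (Smat A q k) *v y"
    unfolding Smat_take[OF l assms(3)] matrix_transpose_mul matrix_vector_mul_assoc ..
  then show ?thesis unfolding gterm_def node_take[OF assms] by simp
qed

lemma gterm_drop:
  assumes "length q = Suc M" "k \<le> M" "M \<ge> 1"
  shows "gterm A P (drop 1 q) k y = gterm A P q (Suc k) y"
  unfolding gterm_def node_drop[OF assms] Smat_drop ..


lemma node_in_V:
  assumes "\<forall>e\<in>E. src e \<in> V \<and> tgt e \<in> V" "p \<in> paths E n" "n \<ge> 1" "k \<le> n"
  shows "node_at p k \<in> V"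
proof -
  have l: "length p = n" and s: "set p \<subseteq> E" using assms(2) unfolding paths_def is_path_def by auto
  show ?thesis
  proof (cases "k < n")
    case True
    then have "p ! k \<in> E" using l s by (metis nth_mem subsetD)
    then show ?thesis using True l assms(1) unfolding node_at_def by auto
  next
    case False
    have "p \<noteq> []" using l assms(3) by auto
    then have "last p \<in> E" using s by (metis last_in_set subsetD)
    then show ?thesis using False l assms(1) unfolding node_at_def by auto
  qed
qed

lemma feasible:
  fixes V :: "'v set" and E :: "('v,'l) edge set" and A :: "'l \<Rightarrow> real^'n^'n"
  assumes VE: "\<forall>e\<in>E. src e \<in> V \<and> tgt e \<in> V" and M1: "M \<ge> 1" and gpos: "\<gamma> > 0"
    and Qpd: "\<forall>v\<in>V. pos_def (Q v)"
    and Qe: "\<forall>(v,w,s)\<in>product_lift_edges E (Suc M).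
               psd ((\<gamma>^2) *\<^sub>R Q v - transpose (prod_mat A s) ** Q w ** prod_mat A s)"
  shows "\<exists>Q' :: ('v,'l) edge list \<Rightarrow> real^'n^'n.
      (\<forall>v\<in>paths E M. pos_def (Q' v)) \<and>
      (\<forall>(v,w,s)\<in>path_lift_edges E M.
          psd (((\<gamma> powr (1/real (Suc M)))^2) *\<^sub>R Q' v - transpose (A s) ** Q' w ** A s))"
proof -
  define g' where "g' = \<gamma> powr (1/real (Suc M))"
  define c where "c = inverse (g'^2)"
  define P where "P = (\<lambda>v. matrix_inv (Q v))"
  define Q' where "Q' = (\<lambda>p. matrix_inv (Pmat A P c p))"
  have g'pos: "g' > 0" unfolding g'_def using gpos by simp
  have cpos: "c > 0" unfolding c_def using g'pos by simp
  have g'pow: "g'^(2*Suc M) = \<gamma>^2"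
  proof -
    have "g'^(Suc M) = g' powr real (Suc M)" using g'pos by (rule powr_realpow[symmetric])
    also have "\<dots> = \<gamma> powr (1/real (Suc M) * real (Suc M))" unfolding g'_def by (simp add: powr_powr)
    also have "\<dots> = \<gamma>" using gpos by simp
    finally have "g'^(Suc M) = \<gamma>" .
    then show ?thesis by (metis power_mult mult.commute)
  qed
  have Ppd: "v \<in> V \<Longrightarrow> pos_def (P v)" for v unfolding P_def using Qpd pd_inv_pd by blast
  have Pm_pd: "pos_def (Pmat A P c p)" if "p \<in> paths E n" "n \<ge> 1" for p n
  proof (rule Pmat_pd[OF _ cpos])
    fix k assume "k \<le> length p"
    then show "pos_def (P (node_at p k))"
      using node_in_V[OF VE that] paths_len[OF that(1)] Ppd by simp
  qed
  have gnn: "0 \<le> gterm A P q k z" if "q \<in> paths E (Suc M)" "k \<le> Suc M" for q k z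
    using Ppd[OF node_in_V[OF VE that(1) _ that(2)]] unfolding gterm_def pos_def_def
    by (metis inner_zero_left order_le_less le_add1 plus_1_eq_Suc)
  have edge: "psd ((g'^2) *\<^sub>R Q' (take M q) - transpose (A (lbl (last q))) ** Q' (drop 1 q) ** A (lbl (last q)))"
    if q: "q \<in> paths E (Suc M)" for q
  proof -
    let ?s = "lbl (last q)"
    have lq: "length q = Suc M" using paths_len[OF q] .
    have qne: "q \<noteq> []" using lq by auto
    have ipq: "is_path E q" and sq: "set q \<subseteq> E" using q unfolding paths_def is_path_def by auto
    have p1: "take M q \<in> paths E M" using ipq lq unfolding paths_def is_path_def
      by (auto dest: in_set_takeD)
    have p2: "drop 1 q \<in> paths E M" using ipq lq unfolding paths_def is_path_def
      by (auto dest: in_set_dropD)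
    define B where "B = prod_mat A (map lbl q)"
    define v0 where "v0 = src (hd q)"
    define w0 where "w0 = tgt (last q)"
    have v0V: "v0 \<in> V" using VE sq qne unfolding v0_def by (metis hd_in_set subsetD)
    have w0V: "w0 \<in> V" using VE sq qne unfolding w0_def by (metis last_in_set subsetD)
    have "(v0, w0, map lbl q) \<in> product_lift_edges E (Suc M)"
      unfolding product_lift_edges_def v0_def w0_def using q by blast
    then have "psd ((\<gamma>^2) *\<^sub>R Q v0 - transpose B ** Q w0 ** B)" using Qe unfolding B_def by auto
    then have H: "z \<bullet> ((transpose B ** Q w0 ** B) *v z) \<le> \<gamma>^2 * (z \<bullet> (Q v0 *v z))" for z
      unfolding psd_iff by blast
    have H': "(B *v z) \<bullet> (Q w0 *v (B *v z)) \<le> \<gamma>^2 * (z \<bullet> (Q v0 *v z))" for z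
      using H[of z] form_sandwich[of z "transpose B" "Q w0"] by simp
    have D: "y \<bullet> ((B ** P v0 ** transpose B) *v y) \<le> \<gamma>^2 * (y \<bullet> (P w0 *v y))" for y
      unfolding P_def by (rule dual[OF Qpd[rule_format, OF v0V] Qpd[rule_format, OF w0V] _ H']) simp
    have key: "gterm A P q 0 z \<le> g'^(2*Suc M) * gterm A P q (Suc M) z" for z
    proof -
      have "gterm A P q 0 z = z \<bullet> ((B ** P v0 ** transpose B) *v z)"
        unfolding gterm_def form_sandwich Smat_def B_def v0_def node_at_def using qne
        by (simp add: hd_conv_nth)
      moreover have "gterm A P q (Suc M) z = z \<bullet> (P w0 *v z)"
        unfolding gterm_def Smat_def w0_def node_at_def using lq by simp
      ultimately show ?thesis using D[of z] g'pow by simp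
    qed
    have HL: "(transpose (A ?s) *v z) \<bullet> (Pmat A P c (take M q) *v (transpose (A ?s) *v z))
        \<le> g'^2 * (z \<bullet> (Pmat A P c (drop 1 q) *v z))" for z
    proof -
      have "(transpose (A ?s) *v z) \<bullet> (Pmat A P c (take M q) *v (transpose (A ?s) *v z))
          = (\<Sum>k\<le>M. c^(M-k) * gterm A P q k z)"
        unfolding Pmat_form using lq gterm_take[OF q M1] by (intro sum.cong) auto
      also have "\<dots> \<le> g'^2 * (\<Sum>k\<le>M. c^(M-k) * gterm A P q (Suc k) z)"
        by (rule sum_ineq[OF g'pos c_def _ key]) (rule gnn[OF q])
      also have "(\<Sum>k\<le>M. c^(M-k) * gterm A P q (Suc k) z) = z \<bullet> (Pmat A P c (drop 1 q) *v z)"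
      proof -
        have ld: "length (drop 1 q) = M" using lq by simp
        show ?thesis unfolding Pmat_form ld
        proof (intro sum.cong refl)
          fix k assume "k \<in> {..M}"
          then have "gterm A P (drop 1 q) k z = gterm A P q (Suc k) z"
            using gterm_drop[OF lq _ M1] by simp
          then show "c ^ (M - k) * gterm A P q (Suc k) z = c ^ (M - k) * gterm A P (drop 1 q) k z"
            by simp
        qed
      qed
      finally show ?thesis .
    qed
    have "y \<bullet> ((transpose (A ?s) ** matrix_inv (Pmat A P c (drop 1 q)) ** transpose (transpose (A ?s))) *v y)
        \<le> g'^2 * (y \<bullet> (matrix_inv (Pmat A P c (take M q)) *v y))" for y
      by (rule dual[OF Pm_pd[OF p2 M1] Pm_pd[OF p1 M1] _ HL]) simp
    then show ?thesis unfolding psd_iff Q'_def by simp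
  qed
  show ?thesis
  proof (intro exI[of _ Q'] conjI ballI)
    fix p assume "p \<in> paths E M"
    then show "pos_def (Q' p)" unfolding Q'_def using Pm_pd[OF _ M1] pd_inv_pd by blast
  next
    fix x assume "x \<in> path_lift_edges E M"
    then obtain q where q: "q \<in> paths E (Suc M)" and x: "x = (take M q, drop 1 q, lbl (last q))"
      unfolding path_lift_edges_def by blast
    show "case x of (v, w, s) \<Rightarrow>
      psd ((\<gamma> powr (1 / real (Suc M)))\<^sup>2 *\<^sub>R Q' v - transpose (A s) ** Q' w ** A s)"
      using edge[OF q] unfolding x g'_def by simp
  qed
qed


definition GS :: "'v set \<Rightarrow> ('v,'l) edge set \<Rightarrow> ('l \<Rightarrow> real^'n^'n) \<Rightarrow> real set" where
  "GS V E A = {\<gamma>. \<gamma> \<ge> 0 \<and> (\<exists>Q :: 'v \<Rightarrow> real^'n^'n.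
      (\<forall>v\<in>V. pos_def (Q v)) \<and>
      (\<forall>(v,w,s)\<in>E. psd ((\<gamma>^2) *\<^sub>R Q v - transpose (A s) ** Q w ** A s)))}"

lemma gamma_star_GS: "gamma_star V E A = Inf (GS V E A)"
  unfolding gamma_star_def GS_def ..

lemma GS_bdd: "bdd_below (GS V E A)"
  unfolding GS_def by (rule bdd_belowI[of _ 0]) auto

lemma GS_nonneg: "x \<in> GS V E A \<Longrightarrow> x \<ge> 0"
  unfolding GS_def by auto

lemma pd_one: "pos_def (mat 1 :: real^'n^'n)"
  unfolding pos_def_def sym_mat_def by (simp add: transpose_mat)

lemma GS_nonempty:
  fixes A :: "'l \<Rightarrow> real^'n^'n"
  assumes "finite E"
  shows "GS V E A \<noteq> {}"
proof -
  define K where "K = 1 + (\<Sum>e\<in>E. onorm ((*v) (A (snd (snd e)))))"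
  have on: "0 \<le> onorm ((*v) (A s))" for s by (rule onorm_pos_le) simp
  have Kb: "onorm ((*v) (A s)) \<le> K" if "(v,w,s) \<in> E" for v w s
  proof -
    have "onorm ((*v) (A (snd (snd (v,w,s))))) \<le> (\<Sum>e\<in>E. onorm ((*v) (A (snd (snd e)))))"
      using member_le_sum[OF that, of "\<lambda>e. onorm ((*v) (A (snd (snd e))))"] on assms by simp
    then show ?thesis unfolding K_def by simp
  qed
  have K0: "K \<ge> 0" unfolding K_def by (simp add: on sum_nonneg add_nonneg_nonneg)
  have "K \<in> GS V E A"
    unfolding GS_def
  proof (intro CollectI conjI K0 exI[of _ "\<lambda>_. mat 1"] ballI)
    show "pos_def (mat 1)" for v :: 'v by (rule pd_one)
    fix x assume "x \<in> E"
    then obtain v w s where x: "x = (v,w,s)" and xE: "(v,w,s) \<in> E" by (cases x) auto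
    have "y \<bullet> ((transpose (A s) ** mat 1 ** A s) *v y) \<le> K^2 * (y \<bullet> (mat 1 *v y))" for y
    proof -
      have "y \<bullet> ((transpose (A s) ** mat 1 ** A s) *v y) = (A s *v y) \<bullet> (A s *v y)"
        using form_sandwich[of y "transpose (A s)" "mat 1"] by simp
      also have "\<dots> = (norm (A s *v y))^2" by (simp add: dot_square_norm)
      also have "\<dots> \<le> (K * norm y)^2"
      proof (rule power_mono)
        have "norm (A s *v y) \<le> onorm ((*v) (A s)) * norm y" by (rule onorm) simp
        also have "\<dots> \<le> K * norm y" by (rule mult_right_mono[OF Kb[OF xE]]) simp
        finally show "norm (A s *v y) \<le> K * norm y" .
      qed simp
      also have "\<dots> = K^2 * (y \<bullet> (mat 1 *v y))" by (simp add: power_mult_distrib dot_square_norm)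
      finally show ?thesis .
    qed
    then show "case x of (v, w, s) \<Rightarrow> psd (K\<^sup>2 *\<^sub>R mat 1 - transpose (A s) ** mat 1 ** A s)"
      unfolding x psd_iff by simp
  qed
  then show ?thesis by blast
qed

lemma GS_up:
  assumes "\<forall>(v,w,s)\<in>E. v \<in> V" "\<gamma> \<in> GS V E A" "\<gamma> \<le> \<gamma>2"
  shows "\<gamma>2 \<in> GS V E A"
proof -
  obtain Q where Q: "\<forall>v\<in>V. pos_def (Q v)"
    "\<forall>(v,w,s)\<in>E. psd ((\<gamma>^2) *\<^sub>R Q v - transpose (A s) ** Q w ** A s)" and g0: "\<gamma> \<ge> 0"
    using assms(2) unfolding GS_def by auto
  have "\<forall>(v,w,s)\<in>E. psd ((\<gamma>2^2) *\<^sub>R Q v - transpose (A s) ** Q w ** A s)"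
  proof (intro ballI)
    fix x assume "x \<in> E"
    then obtain v w s where x: "x = (v,w,s)" and xE: "(v,w,s) \<in> E" by (cases x) auto
    have vV: "v \<in> V" using assms(1) xE by auto
    have "y \<bullet> ((transpose (A s) ** Q w ** A s) *v y) \<le> \<gamma>2^2 * (y \<bullet> (Q v *v y))" for y
    proof -
      have "y \<bullet> ((transpose (A s) ** Q w ** A s) *v y) \<le> \<gamma>^2 * (y \<bullet> (Q v *v y))"
        using Q(2) xE unfolding psd_iff by auto
      also have "\<dots> \<le> \<gamma>2^2 * (y \<bullet> (Q v *v y))"
      proof (rule mult_right_mono)
        show "\<gamma>^2 \<le> \<gamma>2^2" using g0 assms(3) by (simp add: power_mono)
        show "0 \<le> y \<bullet> (Q v *v y)" using Q(1) vV unfolding pos_def_def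
          by (metis inner_zero_left order_le_less)
      qed
      finally show ?thesis .
    qed
    then show "case x of (v, w, s) \<Rightarrow> psd (\<gamma>2\<^sup>2 *\<^sub>R Q v - transpose (A s) ** Q w ** A s)"
      unfolding x psd_iff by simp
  qed
  then show ?thesis unfolding GS_def using Q(1) g0 assms(3) by auto
qed


lemma paths_finite: "finite E \<Longrightarrow> finite (paths E n)"
  unfolding paths_def is_path_def
  by (rule finite_subset[OF _ finite_lists_length_eq[of E n]]) auto

lemma ple_finite: "finite E \<Longrightarrow> finite (product_lift_edges E T)"
proof -
  assume f: "finite E"
  have "product_lift_edges E T = (\<lambda>p. (src (hd p), tgt (last p), map lbl p)) ` paths E T"
    unfolding product_lift_edges_def by blast
  then show ?thesis using paths_finite[OF f] by simp
qed

lemma ple_src: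
  assumes "\<forall>e\<in>E. src e \<in> V \<and> tgt e \<in> V" "T \<ge> 1"
  shows "\<forall>(v,w,s)\<in>product_lift_edges E T. v \<in> V"
proof (intro ballI)
  fix x assume "x \<in> product_lift_edges E T"
  then obtain p where p: "p \<in> paths E T" "x = (src (hd p), tgt (last p), map lbl p)"
    unfolding product_lift_edges_def by blast
  have "p \<noteq> []" "set p \<subseteq> E" using p(1) assms(2) unfolding paths_def is_path_def by auto
  then have "hd p \<in> E" by (metis hd_in_set subsetD)
  then show "case x of (v,w,s) \<Rightarrow> v \<in> V" using p(2) assms(1) by auto
qed

lemma ple_one: "product_lift_edges E 1 = (\<lambda>e. (src e, tgt e, [lbl e])) ` E"
proof -
  have "paths E 1 = (\<lambda>e. [e]) ` E"
  proof
    show "paths E 1 \<subseteq> (\<lambda>e. [e]) ` E"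
    proof
      fix p assume "p \<in> paths E 1"
      then have "length p = 1" "set p \<subseteq> E" unfolding paths_def is_path_def by auto
      then obtain e where "p = [e]" "e \<in> E" by (metis One_nat_def length_0_conv length_Suc_conv list.set_intros(1) subsetD)
      then show "p \<in> (\<lambda>e. [e]) ` E" by blast
    qed
    show "(\<lambda>e. [e]) ` E \<subseteq> paths E 1" unfolding paths_def is_path_def by auto
  qed
  moreover have "product_lift_edges E 1 = (\<lambda>p. (src (hd p), tgt (last p), map lbl p)) ` paths E 1"
    unfolding product_lift_edges_def by blast
  ultimately show ?thesis by (simp add: image_image)
qed

lemma root_pow:
  fixes x :: real assumes "x > 0" "n \<ge> 1"
  shows "(x powr (1/real n))^n = x"
proof -
  have "(x powr (1/real n))^n = (x powr (1/real n)) powr real n"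
    using assms by (simp add: powr_realpow)
  also have "\<dots> = x powr (1/real n * real n)" by (simp add: powr_powr)
  also have "\<dots> = x" using assms by simp
  finally show ?thesis .
qed

lemma pow_root:
  fixes x :: real assumes "x > 0" "n \<ge> 1"
  shows "(x^n) powr (1/real n) = x"
proof -
  have "x^n = x powr real n" using assms by (simp add: powr_realpow)
  then have "(x^n) powr (1/real n) = x powr (real n * (1/real n))" by (simp add: powr_powr)
  also have "\<dots> = x" using assms by simp
  finally show ?thesis .
qed

theorem theorem3p9:
  fixes V :: "'v set" and E :: "('v,'l) edge set" and A :: "'l \<Rightarrow> real^'n^'n"
    and T :: nat
  assumes "automaton V E"
    and "T \<ge> 1"
  shows "gamma_path_lift V E A (T - 1) \<le> gamma_product_lift V E A T powr (1 / real T)"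
proof -
  have fE: "finite E" and VE: "\<forall>e\<in>E. src e \<in> V \<and> tgt e \<in> V"
    using assms(1) unfolding automaton_def by auto
  define SP where "SP = GS V (product_lift_edges E T) (prod_mat A)"
  define I where "I = Inf SP"
  have gpI: "gamma_product_lift V E A T = I"
    unfolding gamma_product_lift_def I_def SP_def gamma_star_GS ..
  have SPne: "SP \<noteq> {}" unfolding SP_def by (rule GS_nonempty[OF ple_finite[OF fE]])
  have SPb: "bdd_below SP" unfolding SP_def by (rule GS_bdd)
  have I0: "I \<ge> 0" unfolding I_def
    by (rule cInf_greatest[OF SPne]) (auto simp: SP_def GS_nonneg)
  have SPup: "\<gamma> \<in> SP" if "\<gamma> > I" for \<gamma>
  proof -
    have "Inf SP < \<gamma>" using that unfolding I_def .
    then obtain \<gamma>0 where "\<gamma>0 \<in> SP" "\<gamma>0 < \<gamma>" using cInf_less_iff[OF SPne SPb] by auto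
    then show ?thesis unfolding SP_def using GS_up[OF ple_src[OF VE assms(2)]] by (metis less_imp_le)
  qed
  obtain M where TM: "T = Suc M" using assms(2) by (cases T) auto
  show ?thesis
  proof (cases "M = 0")
    case True
    have T1: "T = 1" using TM True by simp
    have eq: "(\<forall>(v,w,s)\<in>E. psd ((\<gamma>^2) *\<^sub>R Q v - transpose (A s) ** Q w ** A s))
       \<longleftrightarrow> (\<forall>(v,w,s)\<in>product_lift_edges E 1.
            psd ((\<gamma>^2) *\<^sub>R Q v - transpose (prod_mat A s) ** Q w ** prod_mat A s))" for \<gamma> Q
      unfolding ple_one by (auto simp: src_def tgt_def lbl_def)
    have "GS V E A = SP"
      unfolding SP_def T1 GS_def using eq by simp
    then have "gamma_path_lift V E A (T - 1) = I"
      unfolding gamma_path_lift_def T1 I_def gamma_star_GS by simp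
    then show ?thesis using gpI I0 T1 by simp
  next
    case False
    then have M1: "M \<ge> 1" by simp
    define SL where "SL = GS (paths E M) (path_lift_edges E M) A"
    have gpl: "gamma_path_lift V E A (T - 1) = Inf SL"
      unfolding gamma_path_lift_def SL_def gamma_star_GS using TM False by simp
    have inSL: "\<gamma> powr (1/real T) \<in> SL" if gSP: "\<gamma> \<in> SP" and gp: "\<gamma> > 0" for \<gamma>
    proof -
      obtain Q where Q: "\<forall>v\<in>V. pos_def (Q v)"
        "\<forall>(v,w,s)\<in>product_lift_edges E (Suc M). psd ((\<gamma>^2) *\<^sub>R Q v - transpose (prod_mat A s) ** Q w ** prod_mat A s)"
        using gSP unfolding SP_def GS_def TM by auto
      show ?thesis using feasible[OF VE M1 gp Q] unfolding SL_def GS_def TM by auto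
    qed
    have SLne: "SL \<noteq> {}" using inSL[of "I+1"] SPup[of "I+1"] I0 by auto
    have g0: "Inf SL \<ge> 0" by (rule cInf_greatest[OF SLne]) (auto simp: SL_def GS_nonneg)
    have "(Inf SL)^T \<le> I"
    proof (rule dense_ge)
      fix \<gamma> assume "I < \<gamma>"
      then have "\<gamma> \<in> SP" "\<gamma> > 0" using SPup I0 by auto
      then have "Inf SL \<le> \<gamma> powr (1/real T)" using inSL by (intro cInf_lower) (auto simp: SL_def GS_bdd)
      then have "(Inf SL)^T \<le> (\<gamma> powr (1/real T))^T" using g0 by (rule power_mono)
      also have "\<dots> = \<gamma>" using \<open>\<gamma> > 0\<close> assms(2) by (rule root_pow)
      finally show "(Inf SL)^T \<le> \<gamma>" .
    qed
    have "Inf SL = ((Inf SL)^T) powr (1/real T)"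
    proof (cases "Inf SL = 0")
      case True then show ?thesis using TM by simp
    next
      case False
      then have "Inf SL > 0" using g0 by simp
      then show ?thesis using assms(2) by (simp add: pow_root)
    qed
    also have "\<dots> \<le> I powr (1/real T)"
      by (rule powr_mono2) (auto simp: \<open>(Inf SL)^T \<le> I\<close> g0)
    finally show ?thesis using gpl gpI by simp
  qed
qed

end
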